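(* Let $G$ be a group (finite or infinite), let $F$ be a field of characteristic zero, and let $\mathfrak{S}$ be a subring of $F[G]$. Then $\mathfrak{S}$ is a Schur ring over $G$ if and only if $\mathfrak{S}$ is closed under the Hadamard product $\circ$ and under the involution $*$, $1\in\mathfrak{S}$, and for every $g\in G$ there exists $\alpha\in\mathfrak{S}$ with $g\in\operatorname{supp}(\alpha)$.
   Context: Elements of $F[G]$ are $\alpha=\sum_{g\in G}\alpha_g g$ with finitely many nonzero $\alpha_g\in F$; $\operatorname{supp}(\alpha)=\{g\mid\alpha_g\neq0\}$; $\alpha\circ\beta=\sum_g\alpha_g\beta_g g$; $\alpha^*=\sum_g\alpha_g g^{-1}$. For finite $C\subseteq G$, $\overline{C}=\sum_{g\in C}g$ and $C^*=\{g^{-1}\mid g\in C\}$. A Schur module is an $F$-subspace $\mathfrak{S}=\operatorname{Span}_F\{\overline{C}\mid C\in\mathcal{P}\}$ for a partition $\mathcal{P}$ of $G$ into finite sets; this partition is denoted $\mathcal{D}(\mathfrak{S})$. A Schur ring over $G$ is a Schur module $\mathfrak{S}$ such that (i) $\{1\}\in\mathcal{D}(\mathfrak{S})$; (ii) $C\in\mathcal{D}(\mathfrak{S})$ implies $C^*\in\mathcal{D}(\mathfrak{S})$; (iii) for all $C,D\in\mathcal{D}(\mathfrak{S})$, $\overline{C}\cdot\overline{D}=\sum_{E\in\mathcal{D}(\mathfrak{S})}\lambda_{CDE}\overline{E}$ with only finitely many $\lambda_{CDE}\in F$ nonzero. *)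

theory Defs
  imports Main
begin

text \<open>The group G is a type of class group_add (not necessarily commutative),
  written additively: group product g*h is g + h, inverse is -g, identity is 0.
  Elements of F[G] are finitely supported functions G \<Rightarrow> F.\<close>

definition supp :: "('g \<Rightarrow> 'f::zero) \<Rightarrow> 'g set" where
  "supp a = {g. a g \<noteq> 0}"

definition grp_alg :: "('g \<Rightarrow> 'f::zero) set" where
  "grp_alg = {a. finite (supp a)}"

definition conv :: "('g::group_add \<Rightarrow> 'f::field) \<Rightarrow> ('g \<Rightarrow> 'f) \<Rightarrow> ('g \<Rightarrow> 'f)" where
  "conv a b = (\<lambda>g. \<Sum>h\<in>supp a. a h * b (- h + g))"

definition had :: "('g \<Rightarrow> 'f::field) \<Rightarrow> ('g \<Rightarrow> 'f) \<Rightarrow> ('g \<Rightarrow> 'f)" where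
  "had a b = (\<lambda>g. a g * b g)"

definition star :: "('g::group_add \<Rightarrow> 'f::field) \<Rightarrow> ('g \<Rightarrow> 'f)" where
  "star a = (\<lambda>g. a (- g))"

definition unit_elt :: "'g::group_add \<Rightarrow> 'f::field" where
  "unit_elt = (\<lambda>g. if g = 0 then 1 else 0)"

definition bar :: "'g set \<Rightarrow> ('g \<Rightarrow> 'f::field)" where
  "bar C = (\<lambda>g. if g \<in> C then 1 else 0)"

definition fspan :: "('g \<Rightarrow> 'f::field) set \<Rightarrow> ('g \<Rightarrow> 'f) set" where
  "fspan X = {a. \<exists>T c. finite T \<and> T \<subseteq> X \<and> a = (\<lambda>g. \<Sum>x\<in>T. c x * x g)}"

definition finite_partition :: "'g set set \<Rightarrow> bool" where
  "finite_partition P \<longleftrightarrow> (\<forall>C\<in>P. C \<noteq> {} \<and> finite C)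
     \<and> (\<forall>C\<in>P. \<forall>D\<in>P. C \<noteq> D \<longrightarrow> C \<inter> D = {}) \<and> \<Union>P = UNIV"

definition schur_module_of :: "('g \<Rightarrow> 'f::field) set \<Rightarrow> 'g set set \<Rightarrow> bool" where
  "schur_module_of S P \<longleftrightarrow> finite_partition P \<and> S = fspan (bar ` P)"

definition schur_ring :: "('g::group_add \<Rightarrow> 'f::field) set \<Rightarrow> bool" where
  "schur_ring S \<longleftrightarrow> (\<exists>P. schur_module_of S P
     \<and> {0} \<in> P
     \<and> (\<forall>C\<in>P. uminus ` C \<in> P)
     \<and> (\<forall>C\<in>P. \<forall>D\<in>P. \<exists>T lam. finite T \<and> T \<subseteq> P \<and>
           conv (bar C) (bar D) = (\<lambda>g. \<Sum>E\<in>T. lam E * (bar E g :: 'f))))"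

text \<open>Subring of F[G], read as an F-subalgebra (not necessarily containing 1).\<close>
definition subalgebra :: "('g::group_add \<Rightarrow> 'f::field) set \<Rightarrow> bool" where
  "subalgebra S \<longleftrightarrow> S \<subseteq> grp_alg \<and> (\<lambda>g. 0) \<in> S
     \<and> (\<forall>a\<in>S. \<forall>b\<in>S. (\<lambda>g. a g + b g) \<in> S)
     \<and> (\<forall>c. \<forall>a\<in>S. (\<lambda>g. c * a g) \<in> S)
     \<and> (\<forall>a\<in>S. \<forall>b\<in>S. conv a b \<in> S)"

end

theory Submission
  imports Defs
begin

lemma bar_inj: "inj (bar :: 'g set \<Rightarrow> ('g \<Rightarrow> 'f::field))"
proof (rule injI)
  fix C D :: "'g set"
  assume h: "(bar C :: 'g \<Rightarrow> 'f) = bar D"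
  show "C = D"
  proof (rule set_eqI)
    fix x
    have "(bar C x :: 'f) = bar D x" using h by simp
    then show "x \<in> C \<longleftrightarrow> x \<in> D" by (auto simp: bar_def split: if_splits)
  qed
qed

lemma rep_fspan:
  fixes lam :: "'g set \<Rightarrow> 'f::field"
  assumes "finite T" "T \<subseteq> P"
  shows "(\<lambda>g. \<Sum>E\<in>T. lam E * (bar E g :: 'f)) \<in> fspan (bar ` P)"
proof -
  have inj: "inj_on (bar :: 'g set \<Rightarrow> ('g \<Rightarrow> 'f)) T"
    by (rule inj_on_subset[OF bar_inj]) simp
  define c where "c = (\<lambda>y. lam (inv (bar :: 'g set \<Rightarrow> ('g \<Rightarrow> 'f)) y))"
  have "(\<lambda>g. \<Sum>E\<in>T. lam E * (bar E g :: 'f)) = (\<lambda>g. \<Sum>y\<in>bar ` T. c y * y g)"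
  proof
    fix g
    have "(\<Sum>y\<in>bar ` T. c y * y g) = (\<Sum>E\<in>T. c (bar E) * (bar E g :: 'f))"
      using sum.reindex[OF inj] by simp
    also have "\<dots> = (\<Sum>E\<in>T. lam E * bar E g)"
      unfolding c_def by (simp add: inv_f_f[OF bar_inj])
    finally show "(\<Sum>E\<in>T. lam E * (bar E g :: 'f)) = (\<Sum>y\<in>bar ` T. c y * y g)" by simp
  qed
  then show ?thesis unfolding fspan_def using assms by blast
qed

lemma sub_add:
  assumes S: "subalgebra S" and "a \<in> S" "b \<in> S"
  shows "(\<lambda>g. a g + b g) \<in> S"
  using assms unfolding subalgebra_def by simp

lemma sub_scale:
  assumes S: "subalgebra S" and "a \<in> S"
  shows "(\<lambda>g. c * a g) \<in> S"
  using assms by (simp add: subalgebra_def)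

lemma sub_sum:
  assumes S: "subalgebra S" and "finite T" and "\<forall>x\<in>T. f x \<in> S"
  shows "(\<lambda>g. \<Sum>x\<in>T. c x * f x g) \<in> S"
  using assms(2,3)
proof (induction T rule: finite_induct)
  case empty
  then show ?case using S by (simp add: subalgebra_def)
next
  case (insert x F)
  have a: "(\<lambda>g. c x * f x g) \<in> S" using sub_scale[OF S] insert by simp
  have b: "(\<lambda>g. \<Sum>x\<in>F. c x * f x g) \<in> S" using insert by simp
  show ?case using sub_add[OF S a b] insert by simp
qed

lemma sub_diff:
  assumes S: "subalgebra S" and "a \<in> S" "b \<in> S"
  shows "(\<lambda>g. a g - b g) \<in> S"
  using sub_add[OF S assms(2) sub_scale[OF S assms(3), of "-1"]] by simp

lemma poly_had:
  assumes S: "subalgebra S" and H: "\<forall>a\<in>S. \<forall>b\<in>S. had a b \<in> S" and a: "a \<in> S"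
    and "finite W"
  shows "(\<lambda>x. a x * (\<Prod>v\<in>W. (a x - v))) \<in> S"
  using assms(4)
proof (induction W rule: finite_induct)
  case empty
  then show ?case using a by simp
next
  case (insert w W)
  let ?f = "\<lambda>x. a x * (\<Prod>v\<in>W. (a x - v))"
  have h: "had ?f a \<in> S" using H insert a by blast
  have s: "(\<lambda>x. w * ?f x) \<in> S" using sub_scale[OF S insert(3)] by blast
  have "(\<lambda>x. had ?f a x - (\<lambda>x. w * ?f x) x) \<in> S" using sub_diff[OF S h s] by simp
  moreover have "(\<lambda>x. had ?f a x - (\<lambda>x. w * ?f x) x) = (\<lambda>x. a x * (\<Prod>v\<in>insert w W. (a x - v)))"
  proof
    fix x
    have "(\<Prod>v\<in>insert w W. (a x - v)) = (a x - w) * (\<Prod>v\<in>W. (a x - v))"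
      using insert(1,2) by simp
    then show "had ?f a x - (\<lambda>x. w * ?f x) x = a x * (\<Prod>v\<in>insert w W. (a x - v))"
      unfolding had_def by (simp only: \<open>(\<Prod>v\<in>insert w W. (a x - v)) = (a x - w) * (\<Prod>v\<in>W. (a x - v))\<close>) (simp add: algebra_simps)
  qed
  ultimately show ?case by (simp only:)
qed

lemma level:
  assumes S: "subalgebra S" and H: "\<forall>a\<in>S. \<forall>b\<in>S. had a b \<in> S" and a: "a \<in> S"
    and c: "c \<noteq> 0"
  shows "bar {x. a x = c} \<in> S"
proof -
  have fin: "finite (supp a)" using S a by (auto simp: subalgebra_def grp_alg_def)
  define W where "W = a ` supp a - {c}"
  have fW: "finite W" using fin W_def by simp
  define K where "K = c * (\<Prod>v\<in>W. (c - v))"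
  have K: "K \<noteq> 0" using c fW by (simp add: K_def W_def)
  have p: "(\<lambda>x. a x * (\<Prod>v\<in>W. (a x - v))) \<in> S" using poly_had[OF S H a fW] .
  have "(\<lambda>x. (1/K) * (a x * (\<Prod>v\<in>W. (a x - v)))) \<in> S" using sub_scale[OF S p] .
  moreover have "(\<lambda>x. (1/K) * (a x * (\<Prod>v\<in>W. (a x - v)))) = bar {x. a x = c}"
  proof
    fix x
    show "(1/K) * (a x * (\<Prod>v\<in>W. (a x - v))) = bar {x. a x = c} x"
    proof (cases "a x = c")
      case True
      then show ?thesis using K by (simp add: bar_def K_def)
    next
      case False
      show ?thesis
      proof (cases "a x = 0")
        case True
        then show ?thesis using False by (simp add: bar_def)
      next
        case nz: False
        then have "a x \<in> W" using False by (auto simp: W_def supp_def)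
        then have "(\<Prod>v\<in>W. (a x - v)) = 0" using fW by (auto simp: prod_zero_iff)
        then show ?thesis using False by (simp add: bar_def)
      qed
    qed
  qed
  ultimately show ?thesis by (simp only:)
qed

lemma bar_had: "had (bar C) (bar D) = (bar (C \<inter> D) :: 'g \<Rightarrow> 'f::field)"
  by (auto simp: had_def bar_def)

lemma bar_diff: "(\<lambda>g. bar C g - had (bar C) (bar D) g) = (bar (C - D) :: 'g \<Rightarrow> 'f::field)"
  by (auto simp: had_def bar_def)

lemma backward:
  fixes S :: "('g::group_add \<Rightarrow> 'f::field) set"
  assumes S: "subalgebra S" and H: "\<forall>a\<in>S. \<forall>b\<in>S. had a b \<in> S"
    and St: "\<forall>a\<in>S. star a \<in> S" and U: "unit_elt \<in> S"
    and Cov: "\<forall>g. \<exists>a\<in>S. g \<in> supp a"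
  shows "schur_ring S"
proof -
  define B where "B = {C. C \<noteq> {} \<and> finite C \<and> bar C \<in> S}"
  define P where "P = {C \<in> B. \<forall>D\<in>B. D \<subseteq> C \<longrightarrow> D = C}"
  have Bint: "C \<inter> D \<in> B" if "C \<in> B" "D \<in> B" "C \<inter> D \<noteq> {}" for C D
  proof -
    have "had (bar C) (bar D) \<in> S" using H that unfolding B_def by blast
    then show ?thesis using that unfolding B_def by (simp add: bar_had)
  qed
  have Bdiff: "C - D \<in> B" if "C \<in> B" "D \<in> B" "C - D \<noteq> {}" for C D
  proof -
    have "had (bar C) (bar D) \<in> S" using H that unfolding B_def by blast
    then have "(\<lambda>g. bar C g - had (bar C) (bar D) g) \<in> S"
      using sub_diff[OF S] that unfolding B_def by blast
    then show ?thesis using that unfolding B_def by (simp add: bar_diff)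
  qed
  have LB: "{x. a x = a g} \<in> B" if "a \<in> S" "a g \<noteq> 0" for a g
  proof -
    have fin: "finite (supp a)" using S that by (auto simp: subalgebra_def grp_alg_def)
    have "{x. a x = a g} \<subseteq> supp a" using that by (auto simp: supp_def)
    then have "finite {x. a x = a g}" using fin finite_subset by blast
    then show ?thesis using level[OF S H that(1) that(2)] unfolding B_def by auto
  qed
  have ex_atom: "\<exists>C\<in>P. g \<in> C" for g
  proof -
    obtain a where a: "a \<in> S" "a g \<noteq> 0" using Cov by (auto simp: supp_def)
    have "\<exists>n. \<exists>C. C \<in> B \<and> g \<in> C \<and> card C = n" using LB[OF a] by blast
    then obtain n where n: "\<exists>C. C \<in> B \<and> g \<in> C \<and> card C = n"
      and nmin: "\<forall>m<n. \<not> (\<exists>C. C \<in> B \<and> g \<in> C \<and> card C = m)"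
      using exists_least_iff[where P="\<lambda>n. \<exists>C. C \<in> B \<and> g \<in> C \<and> card C = n"] by blast
    then obtain C where C: "C \<in> B" "g \<in> C" "card C = n" by blast
    have "\<forall>D\<in>B. D \<subseteq> C \<longrightarrow> D = C"
    proof (intro ballI impI)
      fix D assume D: "D \<in> B" "D \<subseteq> C"
      have fC: "finite C" using C B_def by auto
      show "D = C"
      proof (cases "g \<in> D")
        case True
        then have "\<not> card D < card C" using nmin D C by blast
        then show ?thesis using D fC by (meson card_seteq not_le)
      next
        case False
        then have "C - D \<in> B" using Bdiff[OF C(1) D(1)] C by blast
        moreover have "C - D \<subset> C" using D B_def by auto
        then have "card (C - D) < card C" using fC psubset_card_mono by blast
        ultimately show ?thesis using nmin C False by blast
      qed
    qed
    then have "C \<in> P" using C unfolding P_def by blast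
    then show ?thesis using C by blast
  qed
  have PB: "C \<in> B" if "C \<in> P" for C using that unfolding P_def by simp
  have Pmin: "D = C" if "C \<in> P" "D \<in> B" "D \<subseteq> C" for C D using that unfolding P_def by simp
  have disj: "C = D" if "C \<in> P" "D \<in> P" "C \<inter> D \<noteq> {}" for C D
  proof -
    have "C \<inter> D \<in> B" using Bint[OF PB[OF that(1)] PB[OF that(2)] that(3)] .
    then have "C \<inter> D = C" "C \<inter> D = D" using Pmin[OF that(1)] Pmin[OF that(2)] by auto
    then show ?thesis by simp
  qed
  have f1: "\<forall>C\<in>P. C \<noteq> {} \<and> finite C" using PB unfolding B_def by simp
  have f2: "\<forall>C\<in>P. \<forall>D\<in>P. C \<noteq> D \<longrightarrow> C \<inter> D = {}" using disj by blast
  have f3: "\<Union>P = UNIV" using ex_atom by blast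
  have fp: "finite_partition P"
    unfolding finite_partition_def using f1 f2 f3 by blast
  have const: "a x = a y" if a: "a \<in> S" and A: "A \<in> P" and xy: "x \<in> A" "y \<in> A" for a A x y
  proof -
    have one: "a y = a x" if "a x \<noteq> 0" "x \<in> A" "y \<in> A" for x y
    proof -
      have L: "{z. a z = a x} \<in> B" using LB[OF a that(1)] .
      have "A \<inter> {z. a z = a x} \<in> B" using Bint[OF PB[OF A] L] that by blast
      then have "A \<inter> {z. a z = a x} = A" using Pmin[OF A] by blast
      then show ?thesis using that by blast
    qed
    show ?thesis
    proof (cases "a x = 0")
      case False
      then show ?thesis using one[OF False xy] by simp
    next
      case True
      show ?thesis
      proof (cases "a y = 0")
        case True
        then show ?thesis using \<open>a x = 0\<close> by simp
      next
        case False
        then show ?thesis using one[OF False xy(2) xy(1)] by simp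
      qed
    qed
  qed
  have rep: "\<exists>T lam. finite T \<and> T \<subseteq> P \<and> a = (\<lambda>g. \<Sum>E\<in>T. lam E * (bar E g :: 'f))"
    if a: "a \<in> S" for a
  proof -
    define T where "T = {A \<in> P. A \<inter> supp a \<noteq> {}}"
    define lam where "lam = (\<lambda>A. a (SOME x. x \<in> A))"
    have fin: "finite (supp a)" using S a by (auto simp: subalgebra_def grp_alg_def)
    have "T \<subseteq> Pow (supp a)"
    proof
      fix A assume A: "A \<in> T"
      then obtain x where x: "x \<in> A" "a x \<noteq> 0" by (auto simp: T_def supp_def)
      have "A \<subseteq> supp a"
      proof
        fix y assume "y \<in> A"
        then have "a y = a x" using const[OF a _ _ x(1)] A T_def by blast
        then show "y \<in> supp a" using x by (simp add: supp_def)
      qed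
      then show "A \<in> Pow (supp a)" by simp
    qed
    then have fT: "finite T" using fin by (meson finite_Pow_iff finite_subset)
    have "a = (\<lambda>g. \<Sum>E\<in>T. lam E * (bar E g :: 'f))"
    proof
      fix g
      obtain A0 where A0: "A0 \<in> P" "g \<in> A0" using ex_atom by blast
      have "(\<Sum>E\<in>T. lam E * (bar E g :: 'f)) = (\<Sum>E\<in>T. if E = A0 then lam E else 0)"
      proof (rule sum.cong)
        fix E assume E: "E \<in> T"
        then have "E \<in> P" by (simp add: T_def)
        then have "g \<in> E \<longleftrightarrow> E = A0" using disj A0 by blast
        then show "lam E * (bar E g :: 'f) = (if E = A0 then lam E else 0)"
          by (auto simp: bar_def)
      qed simp
      also have "\<dots> = (if A0 \<in> T then lam A0 else 0)" using fT by (simp add: sum.delta')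
      also have "\<dots> = a g"
      proof (cases "A0 \<in> T")
        case True
        have "(SOME x. x \<in> A0) \<in> A0" using A0 by (meson someI)
        then have "lam A0 = a g" unfolding lam_def using const[OF a A0(1) _ A0(2)] by blast
        then show ?thesis using True by simp
      next
        case False
        then have "g \<notin> supp a" using A0 by (auto simp: T_def)
        then show ?thesis using False by (simp add: supp_def)
      qed
      finally show "a g = (\<Sum>E\<in>T. lam E * (bar E g :: 'f))" by simp
    qed
    then show ?thesis using fT T_def by blast
  qed
  have PS: "bar ` P \<subseteq> S" by (auto simp: P_def B_def)
  have Seq: "S = fspan (bar ` P)"
  proof
    show "S \<subseteq> fspan (bar ` P)"
    proof
      fix a assume "a \<in> S"
      then obtain T lam where "finite T" "T \<subseteq> P" "a = (\<lambda>g. \<Sum>E\<in>T. lam E * (bar E g :: 'f))"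
        using rep by blast
      then show "a \<in> fspan (bar ` P)" using rep_fspan by blast
    qed
    show "fspan (bar ` P) \<subseteq> S"
    proof
      fix a :: "'g \<Rightarrow> 'f" assume "a \<in> fspan (bar ` P)"
      then obtain T c where T: "finite T" "T \<subseteq> bar ` P" "a = (\<lambda>g. \<Sum>x\<in>T. c x * x g)"
        unfolding fspan_def by blast
      have "\<forall>x\<in>T. id x \<in> S" using T(2) PS by auto
      then have "(\<lambda>g. \<Sum>x\<in>T. c x * id x g) \<in> S" using sub_sum[OF S T(1)] by blast
      then show "a \<in> S" using T by simp
    qed
  qed
  have z: "{0} \<in> P"
  proof -
    have "unit_elt = (bar {0} :: 'g \<Rightarrow> 'f)" by (auto simp: unit_elt_def bar_def)
    then have "{0} \<in> B" using U by (simp add: B_def)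
    then show ?thesis unfolding P_def B_def by auto
  qed
  have negmem: "g \<in> uminus ` C \<longleftrightarrow> - g \<in> C" for g :: 'g and C
    by (metis image_iff minus_minus)
  have starbar: "star (bar C) = (bar (uminus ` C) :: 'g \<Rightarrow> 'f)" for C :: "'g set"
    by (auto simp: star_def bar_def negmem)
  have negB: "uminus ` C \<in> B" if "C \<in> B" for C
    using that St starbar unfolding B_def by auto
  have neg: "uminus ` C \<in> P" if C: "C \<in> P" for C
  proof -
    have "uminus ` C \<in> B" using negB C P_def by blast
    moreover have "D = uminus ` C" if D: "D \<in> B" "D \<subseteq> uminus ` C" for D
    proof -
      have "uminus ` D \<in> B" using negB D by blast
      moreover have "uminus ` D \<subseteq> C" using D(2) by auto
      ultimately have "uminus ` D = C" using C P_def by blast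
      then have "uminus ` uminus ` D = uminus ` C" by simp
      then show ?thesis by (simp add: image_image)
    qed
    ultimately show ?thesis unfolding P_def by blast
  qed
  have cv: "\<exists>T lam. finite T \<and> T \<subseteq> P \<and>
           conv (bar C) (bar D) = (\<lambda>g. \<Sum>E\<in>T. lam E * (bar E g :: 'f))"
    if "C \<in> P" "D \<in> P" for C D
  proof -
    have "conv (bar C) (bar D) \<in> S" using S PS that unfolding subalgebra_def by blast
    then show ?thesis using rep by blast
  qed
  show ?thesis unfolding schur_ring_def schur_module_of_def
    using fp Seq z neg cv by blast
qed

lemma span_single:
  fixes x :: "'g \<Rightarrow> 'f::field"
  assumes "x \<in> X" shows "x \<in> fspan X"
proof -
  have "x = (\<lambda>g. \<Sum>y\<in>{x}. (\<lambda>_. 1::'f) y * y g)" by simp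
  then show ?thesis unfolding fspan_def using assms
    by (intro CollectI exI[of _ "{x}"] exI[of _ "\<lambda>_. 1::'f"]) simp
qed

lemma star_star: "star (star a) = a"
  by (simp add: star_def)

lemma forward:
  fixes S :: "('g::group_add \<Rightarrow> 'f::field) set"
  assumes "schur_ring S"
  shows "(\<forall>a\<in>S. \<forall>b\<in>S. had a b \<in> S) \<and> (\<forall>a\<in>S. star a \<in> S) \<and> unit_elt \<in> S
           \<and> (\<forall>g. \<exists>a\<in>S. g \<in> supp a)"
proof -
  obtain P where fp: "finite_partition P" and Seq: "S = fspan (bar ` P)" and z: "{0} \<in> P"
    and neg: "\<forall>C\<in>P. uminus ` C \<in> P"
    using assms unfolding schur_ring_def schur_module_of_def by blast
  have single: "bar C \<in> S" if "C \<in> P" for C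
    unfolding Seq using that by (intro span_single) simp
  have key: "x g * y g = (if y = x then x g else 0)" if xy: "x \<in> bar ` P" "y \<in> bar ` P" for x y :: "'g \<Rightarrow> 'f" and g
  proof -
    obtain C D where C: "C \<in> P" "x = bar C" and D: "D \<in> P" "y = bar D" using xy by blast
    show ?thesis
    proof (cases "C = D")
      case True
      then show ?thesis using C D by (simp add: bar_def)
    next
      case False
      then have "C \<inter> D = {}" using fp C D unfolding finite_partition_def by blast
      moreover have "y \<noteq> x" using False C D bar_inj by (metis injD)
      ultimately show ?thesis using C D by (auto simp: bar_def)
    qed
  qed
  have H: "had a b \<in> S" if a: "a \<in> S" and b: "b \<in> S" for a b
  proof -
    obtain T c where T: "finite T" "T \<subseteq> bar ` P" "a = (\<lambda>g. \<Sum>x\<in>T. c x * x g)"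
      using a unfolding Seq fspan_def by blast
    obtain U d where U: "finite U" "U \<subseteq> bar ` P" "b = (\<lambda>g. \<Sum>x\<in>U. d x * x g)"
      using b unfolding Seq fspan_def by blast
    have "had a b = (\<lambda>g. \<Sum>x\<in>T \<inter> U. (c x * d x) * x g)"
    proof
      fix g
      have "had a b g = (\<Sum>x\<in>T. c x * x g) * (\<Sum>y\<in>U. d y * y g)"
        unfolding T(3) U(3) had_def by (rule refl)
      also have "\<dots> = (\<Sum>x\<in>T. \<Sum>y\<in>U. c x * d y * (x g * y g))"
        unfolding sum_product by (rule sum.cong[OF refl], rule sum.cong[OF refl]) (simp only: mult_ac)
      also have "\<dots> = (\<Sum>x\<in>T. \<Sum>y\<in>U. if y = x then c x * d y * x g else 0)"
      proof (rule sum.cong[OF refl], rule sum.cong[OF refl])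
        fix x y assume "x \<in> T" "y \<in> U"
        then have "x \<in> bar ` P" "y \<in> bar ` P" using T(2) U(2) by auto
        then have "x g * y g = (if y = x then x g else 0)" by (rule key)
        then show "c x * d y * (x g * y g) = (if y = x then c x * d y * x g else 0)" by simp
      qed
      also have "\<dots> = (\<Sum>x\<in>T. if x \<in> U then c x * d x * x g else 0)"
        using U(1) by (simp add: sum.delta)
      also have "\<dots> = (\<Sum>x\<in>T \<inter> U. (c x * d x) * x g)"
        using T(1) by (simp add: sum.inter_restrict)
      finally show "had a b g = (\<Sum>x\<in>T \<inter> U. (c x * d x) * x g)" .
    qed
    moreover have "finite (T \<inter> U)" "T \<inter> U \<subseteq> bar ` P" using T U by auto
    ultimately show ?thesis unfolding Seq fspan_def
      by (intro CollectI exI[of _ "T \<inter> U"] exI[of _ "\<lambda>x. c x * d x"]) simp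
  qed
  have St: "star a \<in> S" if a: "a \<in> S" for a
  proof -
    obtain T c where T: "finite T" "T \<subseteq> bar ` P" "a = (\<lambda>g. \<Sum>x\<in>T. c x * x g)"
      using a unfolding Seq fspan_def by blast
    have inj: "inj_on star T" by (metis inj_onI star_star)
    have sb: "star (bar C) = (bar (uminus ` C) :: 'g \<Rightarrow> 'f)" for C :: "'g set"
    proof
      fix g
      have "g \<in> uminus ` C \<longleftrightarrow> - g \<in> C" by (metis image_iff minus_minus)
      then show "star (bar C) g = (bar (uminus ` C) g :: 'f)" by (simp add: star_def bar_def)
    qed
    have sub: "star ` T \<subseteq> bar ` P"
    proof
      fix y assume "y \<in> star ` T"
      then obtain C where "C \<in> P" "y = star (bar C)" using T(2) by blast
      then show "y \<in> bar ` P" using sb neg by auto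
    qed
    have "star a = (\<lambda>g. \<Sum>y\<in>star ` T. c (star y) * y g)"
    proof
      fix g
      have "(\<Sum>y\<in>star ` T. c (star y) * y g) = (\<Sum>x\<in>T. c (star (star x)) * star x g)"
        using sum.reindex[OF inj] by simp
      also have "\<dots> = (\<Sum>x\<in>T. c x * x (- g))" by (simp add: star_star star_def)
      finally show "star a g = (\<Sum>y\<in>star ` T. c (star y) * y g)" using T by (simp add: star_def)
    qed
    moreover have "finite (star ` T)" using T by simp
    ultimately show ?thesis unfolding Seq fspan_def using sub
      by (intro CollectI exI[of _ "star ` T"] exI[of _ "\<lambda>y. c (star y)"]) simp
  qed
  have U: "unit_elt \<in> S"
  proof -
    have "unit_elt = (bar {0} :: 'g \<Rightarrow> 'f)" by (auto simp: unit_elt_def bar_def)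
    then show ?thesis using single[OF z] by (simp only:)
  qed
  have Cov: "\<exists>a\<in>S. g \<in> supp a" for g
  proof -
    obtain C where C: "C \<in> P" "g \<in> C" using fp unfolding finite_partition_def by blast
    then have "g \<in> supp (bar C :: 'g \<Rightarrow> 'f)" by (simp add: supp_def bar_def)
    then show ?thesis using single C by blast
  qed
  show ?thesis using H St U Cov by blast
qed

theorem corollary2p10:
  fixes S :: "('g::group_add \<Rightarrow> 'f::field_char_0) set"
  assumes "subalgebra S"
  shows "schur_ring S \<longleftrightarrow>
           (\<forall>a\<in>S. \<forall>b\<in>S. had a b \<in> S) \<and> (\<forall>a\<in>S. star a \<in> S) \<and> unit_elt \<in> S
           \<and> (\<forall>g. \<exists>a\<in>S. g \<in> supp a)"
  using forward[of S] backward[OF assms] by blast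

end
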